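(* Let $n\ge1$ and let $o_1,\dots,o_n\ge1$ be integers. For each layer $\ell=1,\dots,n$ let $H^{(\ell)}_0\in\mathbb{R}$ and $H^{(\ell)}_j:\mathbb{Z}^j\to\mathbb{R}$, $1\le j\le o_\ell$, be finitely supported kernels. For a signal $x:\mathbb{Z}\to\mathbb{R}$ define $x_0=x$ and $x_\ell=\sum_{j=0}^{o_\ell}H^{(\ell)}_j*x_{\ell-1}^j$ for $\ell=1,\dots,n$. Then $x_n$ has the form of an order-$\prod_{\ell=1}^n o_\ell$ Volterra convolution of $x$: there exist finitely supported kernels $F_k:\mathbb{Z}^k\to\mathbb{R}$, $0\le k\le\prod_{\ell=1}^n o_\ell$ ($F_0\in\mathbb{R}$), not depending on $x$, with $x_n=\sum_{k=0}^{\prod_\ell o_\ell}F_k*x^k$.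
   Context: Signals are real functions on $\mathbb{Z}$. For a kernel $H:\mathbb{Z}^n\to\mathbb{R}$ ($n\ge1$) and signals $x_1,\dots,x_n$, the order-$n$ convolution is $(H*[x_1,\dots,x_n])(t)=\sum_{(\tau_1,\dots,\tau_n)\in\mathbb{Z}^n}H(\tau_1,\dots,\tau_n)\prod_{i=1}^n x_i(t-\tau_i)$, and $H*x^n$ denotes $H*[x,\dots,x]$ ($n$ copies). For $n=0$ the kernel is a real number $H_0$ and $H_0*x^0$ is the constant signal with value $H_0$. *)

theory Defs
  imports Complex_Main
begin

type_synonym signal = "int \<Rightarrow> real"

text \<open>A kernel of order j is a function on Z^j, represented as a function on int lists;
only its values on lists of length j matter. The order-0 kernel H_0 is the value at [].\<close>
type_synonym kernel = "int list \<Rightarrow> real"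

definition kernel_support :: "kernel \<Rightarrow> nat \<Rightarrow> int list set" where
  "kernel_support H j = {\<tau>. length \<tau> = j \<and> H \<tau> \<noteq> 0}"

definition fin_supp :: "kernel \<Rightarrow> nat \<Rightarrow> bool" where
  "fin_supp H j \<longleftrightarrow> finite (kernel_support H j)"

text \<open>Order-j convolution H * x^j; for finitely supported H the defining sum over Z^j
has only finitely many nonzero terms, so it is the finite sum over the support.\<close>
definition vconv :: "kernel \<Rightarrow> nat \<Rightarrow> signal \<Rightarrow> signal" where
  "vconv H j x t = (\<Sum>\<tau>\<in>kernel_support H j. H \<tau> * (\<Prod>i<j. x (t - \<tau> ! i)))"

fun layer :: "(nat \<Rightarrow> nat \<Rightarrow> kernel) \<Rightarrow> (nat \<Rightarrow> nat) \<Rightarrow> nat \<Rightarrow> signal \<Rightarrow> signal" where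
  "layer H ord 0 x = x"
| "layer H ord (Suc l) x = (\<lambda>t. \<Sum>j\<le>ord (Suc l). vconv (H (Suc l) j) j (layer H ord l x) t)"

end

theory Submission
  imports Defs
begin

definition mon :: "int list \<Rightarrow> signal \<Rightarrow> int \<Rightarrow> real" where
  "mon \<tau> x t = prod_list (map (\<lambda>s. x (t - s)) \<tau>)"

definition evl :: "(real \<times> int list) list \<Rightarrow> signal \<Rightarrow> int \<Rightarrow> real" where
  "evl ms x t = sum_list (map (\<lambda>p. fst p * mon (snd p) x t) ms)"

definition is_poly :: "nat \<Rightarrow> (signal \<Rightarrow> int \<Rightarrow> real) \<Rightarrow> bool" where
  "is_poly D P \<longleftrightarrow> (\<exists>ms. (\<forall>p\<in>set ms. length (snd p) \<le> D) \<and> (\<forall>x t. P x t = evl ms x t))"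

lemma is_poly_mono: "is_poly D P \<Longrightarrow> D \<le> E \<Longrightarrow> is_poly E P"
  unfolding is_poly_def by (meson order_trans)

lemma is_poly_const: "is_poly D (\<lambda>x t. c)"
  unfolding is_poly_def
  by (rule exI[of _ "[(c, [])]"]) (simp add: evl_def mon_def)

lemma is_poly_id: "is_poly 1 (\<lambda>x t. x t)"
  unfolding is_poly_def
  by (rule exI[of _ "[(1, [0])]"]) (simp add: evl_def mon_def)

lemma is_poly_add:
  assumes "is_poly D P" "is_poly D Q"
  shows "is_poly D (\<lambda>x t. P x t + Q x t)"
proof -
  obtain m1 where m1: "\<forall>p\<in>set m1. length (snd p) \<le> D" "\<forall>x t. P x t = evl m1 x t"
    using assms(1) unfolding is_poly_def by blast
  obtain m2 where m2: "\<forall>p\<in>set m2. length (snd p) \<le> D" "\<forall>x t. Q x t = evl m2 x t"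
    using assms(2) unfolding is_poly_def by blast
  show ?thesis unfolding is_poly_def
    by (rule exI[of _ "m1 @ m2"]) (use m1 m2 in \<open>auto simp: evl_def\<close>)
qed

definition pmul :: "(real \<times> int list) list \<Rightarrow> (real \<times> int list) list \<Rightarrow> (real \<times> int list) list" where
  "pmul m1 m2 = concat (map (\<lambda>p. map (\<lambda>q. (fst p * fst q, snd p @ snd q)) m2) m1)"

lemma evl_pmul: "evl (pmul m1 m2) x t = evl m1 x t * evl m2 x t"
proof (induction m1)
  case Nil
  then show ?case by (simp add: pmul_def evl_def)
next
  case (Cons a m1)
  have "evl (pmul (a # m1) m2) x t = (\<Sum>q\<leftarrow>m2. fst a * fst q * mon (snd a @ snd q) x t) + evl (pmul m1 m2) x t"
    by (simp add: pmul_def evl_def o_def)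
  also have "(\<Sum>q\<leftarrow>m2. fst a * fst q * mon (snd a @ snd q) x t) = (fst a * mon (snd a) x t) * evl m2 x t"
    by (simp add: evl_def mon_def sum_list_const_mult[symmetric] algebra_simps)
  finally show ?case using Cons by (simp add: evl_def algebra_simps)
qed

lemma is_poly_mult:
  assumes "is_poly D P" "is_poly E Q"
  shows "is_poly (D + E) (\<lambda>x t. P x t * Q x t)"
proof -
  obtain m1 where m1: "\<forall>p\<in>set m1. length (snd p) \<le> D" "\<forall>x t. P x t = evl m1 x t"
    using assms(1) unfolding is_poly_def by blast
  obtain m2 where m2: "\<forall>p\<in>set m2. length (snd p) \<le> E" "\<forall>x t. Q x t = evl m2 x t"
    using assms(2) unfolding is_poly_def by blast
  show ?thesis unfolding is_poly_def
  proof (intro exI[of _ "pmul m1 m2"] conjI allI)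
    show "\<forall>p\<in>set (pmul m1 m2). length (snd p) \<le> D + E"
      using m1 m2 by (auto simp: pmul_def add_mono)
    show "P x t * Q x t = evl (pmul m1 m2) x t" for x t
      using m1 m2 by (simp add: evl_pmul)
  qed
qed

lemma is_poly_shift:
  assumes "is_poly D P"
  shows "is_poly D (\<lambda>x t. P x (t - s))"
proof -
  obtain m1 where m1: "\<forall>p\<in>set m1. length (snd p) \<le> D" "\<forall>x t. P x t = evl m1 x t"
    using assms(1) unfolding is_poly_def by blast
  have "evl m1 x (t - s) = evl (map (\<lambda>p. (fst p, map (\<lambda>u. u + s) (snd p))) m1) x t" for x t
    by (simp add: evl_def mon_def o_def algebra_simps)
  then show ?thesis unfolding is_poly_def
    by (intro exI[of _ "map (\<lambda>p. (fst p, map (\<lambda>u. u + s) (snd p))) m1"]) (use m1 in auto)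
qed

lemma is_poly_sum:
  assumes "finite A" "\<And>a. a \<in> A \<Longrightarrow> is_poly D (f a)"
  shows "is_poly D (\<lambda>x t. \<Sum>a\<in>A. f a x t)"
  using assms
proof (induction A rule: finite_induct)
  case empty
  then show ?case using is_poly_const[of D 0] by simp
next
  case (insert a A)
  then show ?case using is_poly_add[of D "f a" "\<lambda>x t. \<Sum>a\<in>A. f a x t"] by simp
qed

lemma is_poly_prod:
  assumes "\<And>i. i < j \<Longrightarrow> is_poly D (f i)"
  shows "is_poly (j * D) (\<lambda>x t. \<Prod>i<j. f i x t)"
  using assms
proof (induction j)
  case 0
  then show ?case using is_poly_const[of 0 1] by simp
next
  case (Suc j)
  then show ?case
    using is_poly_mult[of "j * D" "\<lambda>x t. \<Prod>i<j. f i x t" D "f j"] by (simp add: mult.commute add.commute)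
qed

lemma prod_list_map_nth:
  "prod_list (map f xs) = (\<Prod>i<length xs. (f (xs ! i) :: real))"
  by (induction xs) (simp_all add: prod.lessThan_Suc_shift del: prod.lessThan_Suc)

lemma vconv_mon:
  "vconv H j x t = (\<Sum>\<tau>\<in>kernel_support H j. H \<tau> * mon \<tau> x t)"
  unfolding vconv_def mon_def
  by (rule sum.cong) (auto simp: kernel_support_def prod_list_map_nth)

lemma layer_poly:
  assumes "\<forall>l\<in>{1..n}. \<forall>j\<in>{1..ord l}. fin_supp (H l j) j"
  shows "l \<le> n \<Longrightarrow> is_poly (\<Prod>i=1..l. ord i) (layer H ord l)"
proof (induction l)
  case 0
  then show ?case using is_poly_id by simp
next
  case (Suc l)
  define D where "D = (\<Prod>i=1..l. ord i)"
  have IH: "is_poly D (layer H ord l)" using Suc unfolding D_def by simp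
  have fin: "finite (kernel_support (H (Suc l) j) j)" if "j \<le> ord (Suc l)" for j
  proof (cases "j = 0")
    case True
    then have "kernel_support (H (Suc l) j) j \<subseteq> {[]}" by (auto simp: kernel_support_def)
    then show ?thesis using finite_subset by blast
  next
    case False
    then show ?thesis using assms Suc.prems that unfolding fin_supp_def by auto
  qed
  have "is_poly (ord (Suc l) * D) (\<lambda>x t. vconv (H (Suc l) j) j (layer H ord l x) t)"
    if j: "j \<le> ord (Suc l)" for j
  proof -
    have "is_poly (j * D) (\<lambda>x t. \<Sum>\<tau>\<in>kernel_support (H (Suc l) j) j.
              H (Suc l) j \<tau> * (\<Prod>i<j. layer H ord l x (t - \<tau> ! i)))"
    proof (rule is_poly_sum[OF fin[OF j]])
      fix \<tau>
      have "is_poly (j * D) (\<lambda>x t. \<Prod>i<j. layer H ord l x (t - \<tau> ! i))"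
        by (rule is_poly_prod) (rule is_poly_shift[OF IH])
      then show "is_poly (j * D) (\<lambda>x t. H (Suc l) j \<tau> * (\<Prod>i<j. layer H ord l x (t - \<tau> ! i)))"
        using is_poly_mult[OF is_poly_const[of 0 "H (Suc l) j \<tau>"]] by simp
    qed
    then have "is_poly (ord (Suc l) * D) (\<lambda>x t. \<Sum>\<tau>\<in>kernel_support (H (Suc l) j) j.
              H (Suc l) j \<tau> * (\<Prod>i<j. layer H ord l x (t - \<tau> ! i)))"
      by (rule is_poly_mono) (simp add: j)
    then show ?thesis by (simp add: vconv_def)
  qed
  then have "is_poly (ord (Suc l) * D) (\<lambda>x t. \<Sum>j\<le>ord (Suc l). vconv (H (Suc l) j) j (layer H ord l x) t)"
    by (intro is_poly_sum) auto
  moreover have "(\<Prod>i=1..Suc l. ord i) = ord (Suc l) * D"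
    unfolding D_def by (simp add: prod.nat_ivl_Suc' mult.commute)
  moreover have "layer H ord (Suc l) = (\<lambda>x t. \<Sum>j\<le>ord (Suc l). vconv (H (Suc l) j) j (layer H ord l x) t)"
    by (simp add: fun_eq_iff)
  ultimately show ?case by (simp only:)
qed

lemma sum_filter_list:
  fixes ms :: "(real \<times> 'a) list"
  shows "finite S \<Longrightarrow> (\<Sum>\<tau>\<in>S. sum_list (map fst (filter (\<lambda>p. f p = \<tau>) ms)) * h \<tau>)
     = sum_list (map (\<lambda>p. fst p * h (f p)) (filter (\<lambda>p. f p \<in> S) ms))"
proof (induction ms)
  case Nil
  then show ?case by simp
next
  case (Cons a ms)
  have "(\<Sum>\<tau>\<in>S. sum_list (map fst (filter (\<lambda>p. f p = \<tau>) (a # ms))) * h \<tau>)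
     = (\<Sum>\<tau>\<in>S. (if f a = \<tau> then fst a * h \<tau> else 0)) + (\<Sum>\<tau>\<in>S. sum_list (map fst (filter (\<lambda>p. f p = \<tau>) ms)) * h \<tau>)"
    unfolding sum.distrib[symmetric] by (rule sum.cong) (auto simp: distrib_right)
  also have "(\<Sum>\<tau>\<in>S. (if f a = \<tau> then fst a * h \<tau> else 0)) = (if f a \<in> S then fst a * h (f a) else 0)"
    using Cons.prems by (simp add: sum.delta)
  finally show ?case using Cons by simp
qed

lemma is_poly_kernels:
  assumes "is_poly D P"
  shows "\<exists>F :: nat \<Rightarrow> kernel. (\<forall>k\<le>D. fin_supp (F k) k) \<and>
           (\<forall>x. P x = (\<lambda>t. \<Sum>k\<le>D. vconv (F k) k x t))"
proof -
  obtain ms where ms: "\<forall>p\<in>set ms. length (snd p) \<le> D" "\<forall>x t. P x t = evl ms x t"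
    using assms unfolding is_poly_def by blast
  define F :: "nat \<Rightarrow> kernel" where "F k \<tau> = sum_list (map fst (filter (\<lambda>p. snd p = \<tau>) ms))" for k \<tau>
  define S where "S k = {\<tau>\<in>snd ` set ms. length \<tau> = k}" for k
  have finS: "finite (S k)" for k unfolding S_def by auto
  have sub: "kernel_support (F k) k \<subseteq> S k" for k
  proof
    fix \<tau> assume "\<tau> \<in> kernel_support (F k) k"
    then have "length \<tau> = k" "F k \<tau> \<noteq> 0" by (auto simp: kernel_support_def)
    then have "filter (\<lambda>p. snd p = \<tau>) ms \<noteq> []" unfolding F_def by auto
    then have "\<tau> \<in> snd ` set ms" by (metis (mono_tags, lifting) filter_False image_eqI)
    then show "\<tau> \<in> S k" using \<open>length \<tau> = k\<close> by (simp add: S_def)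
  qed
  have vk: "vconv (F k) k x t = sum_list (map (\<lambda>p. fst p * mon (snd p) x t) (filter (\<lambda>p. length (snd p) = k) ms))" for k x t
  proof -
    have "vconv (F k) k x t = (\<Sum>\<tau>\<in>S k. F k \<tau> * mon \<tau> x t)"
      unfolding vconv_mon
      by (rule sum.mono_neutral_left[OF finS sub]) (auto simp: kernel_support_def S_def)
    also have "\<dots> = sum_list (map (\<lambda>p. fst p * mon (snd p) x t) (filter (\<lambda>p. snd p \<in> S k) ms))"
      unfolding F_def by (rule sum_filter_list[OF finS])
    also have "filter (\<lambda>p. snd p \<in> S k) ms = filter (\<lambda>p. length (snd p) = k) ms"
      by (rule filter_cong) (auto simp: S_def)
    finally show ?thesis .
  qed
  have "(\<Sum>k\<le>D. vconv (F k) k x t) = evl ms x t" for x t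
  proof -
    have "(\<Sum>k\<le>D. vconv (F k) k x t) = (\<Sum>k\<le>D. sum_list (map fst (filter (\<lambda>p. length (snd p) = k)
             (map (\<lambda>p. (fst p * mon (snd p) x t, snd p)) ms))) * 1)"
      by (simp add: vk filter_map o_def)
    also have "\<dots> = sum_list (map (\<lambda>p. fst p * 1) (filter (\<lambda>p. length (snd p) \<in> {..D})
             (map (\<lambda>p. (fst p * mon (snd p) x t, snd p)) ms)))"
      by (rule sum_filter_list) simp
    also have "filter (\<lambda>p. length (snd p) \<in> {..D}) (map (\<lambda>p. (fst p * mon (snd p) x t, snd p)) ms)
       = map (\<lambda>p. (fst p * mon (snd p) x t, snd p)) ms"
      using ms(1) by (auto simp: filter_id_conv)
    finally show ?thesis by (simp add: evl_def o_def)
  qed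
  moreover have "fin_supp (F k) k" for k
    unfolding fin_supp_def using finite_subset[OF sub finS] .
  ultimately show ?thesis using ms(2) by (intro exI[of _ F]) auto
qed

theorem lemma16:
  fixes n :: nat and ord :: "nat \<Rightarrow> nat" and H :: "nat \<Rightarrow> nat \<Rightarrow> kernel"
  assumes "n \<ge> 1"
    and "\<forall>l\<in>{1..n}. ord l \<ge> 1"
    and "\<forall>l\<in>{1..n}. \<forall>j\<in>{1..ord l}. fin_supp (H l j) j"
  shows "\<exists>F :: nat \<Rightarrow> kernel.
           (\<forall>k\<le>(\<Prod>l=1..n. ord l). fin_supp (F k) k) \<and>
           (\<forall>x. layer H ord n x = (\<lambda>t. \<Sum>k\<le>(\<Prod>l=1..n. ord l). vconv (F k) k x t))"
  by (rule is_poly_kernels[OF layer_poly[OF assms(3) order_refl]])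

end
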